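(* Let $n\ge 1$ be an integer and consider the control system with state $(x_n,z_{n-1},\dots,z_1,z_0)\in\mathbb{R}^{n+1}$ and scalar control $v(t)$: $$\dot x_n=v-x_n,\qquad \dot z_{n-1}=v,\qquad \dot z_k=z_{k+1}\ (0\le k\le n-2),$$ together with the running cost $\frac12\big[(z_0-x_1)^2+x_1^2\big]$, where $$x_1:=\sum_{k=1}^{n-1}(-1)^{k+1}z_k+(-1)^{n+1}x_n$$ (for $n=1$, $x_1$ is simply the state $x_n$). Let $p_n,p_{n-1},\dots,p_0$ be adjoint variables associated respectively with $x_n,z_{n-1},\dots,z_0$, with Pontryagin Hamiltonian $$H_S=p_n(v-x_n)+p_{n-1}v+p_{n-2}z_{n-1}+\dots+p_0z_1-\tfrac12\big[(z_0-x_1)^2+x_1^2\big]$$ (the terms $p_{k-1}z_k$ being absent when $n=1$), and adjoint equations $\dot p_n=-\partial H_S/\partial x_n$, $\dot p_{k}=-\partial H_S/\partial z_k$, i.e. $$\dot p_n=p_n+(-1)^{n+1}(2x_1-z_0),\quad \dot p_k=-p_{k-1}+(-1)^{k+1}(2x_1-z_0)\ (1\le k\le n-1),\quad \dot p_0=z_0-x_1 .$$ Suppose that on an open time interval $I$ a solution of these state and adjoint equations, with a continuous control $v$, satisfies the singularity condition $\partial H_S/\partial v=p_n+p_{n-1}=0$ identically on $I$. Then on $I$ one has $z_0=z_1=\dots=z_{n-1}=v$, and there are constants $Y,Z\in\mathbb{R}$ such that for all $t\in I$ $$z_0(t)=\dots=z_{n-1}(t)=v(t)=Ze^{t},\qquad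 x_n(t)=Ye^{-t}+Z\sinh(t).$$ In particular the singular control $v=Ze^t$ has the same form for every $n$.
   Context: This system arises from the scalar dynamics $\dot x+x=u$ by setting $x_k=x^{(k)}$, $z_k=u^{(k)}$, $v=u^{(n)}$, so that the cost integrand $(z_0-x_1)^2+x_1^2$ equals $x^2+\dot x^2$. For $n=1$, write $y=x_1$, $z=z_0$; the system is $\dot y=v-y$, $\dot z=v$ with cost $\int[(z-y)^2+y^2]dt$. *)

theory Defs
  imports "HOL-Analysis.Analysis"
begin

definition x1_of :: "nat \<Rightarrow> (nat \<Rightarrow> real \<Rightarrow> real) \<Rightarrow> (real \<Rightarrow> real) \<Rightarrow> real \<Rightarrow> real" where
  "x1_of n z xn t = (\<Sum>k=1..n-1. (-1)^(k+1) * z k t) + (-1)^(n+1) * xn t"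

end

theory Submission
  imports Defs
begin

lemma deriv_eq_on:
  assumes "open I" "t \<in> I" "\<And>s. s \<in> I \<Longrightarrow> f s = g s"
    "(f has_real_derivative a) (at t)" "(g has_real_derivative b) (at t)"
  shows "a = b"
proof -
  have "(g has_real_derivative a) (at t)"
    using has_field_derivative_transform_within_open[OF assms(4) assms(1,2)] assms(3) by auto
  then show ?thesis using assms(5) DERIV_unique by blast
qed

lemma const_on:
  fixes f :: "real \<Rightarrow> real"
  assumes "is_interval I" "\<And>t. t \<in> I \<Longrightarrow> (f has_real_derivative 0) (at t)"
  shows "\<exists>c. \<forall>t\<in>I. f t = c"
  using has_field_derivative_zero_constant[OF is_interval_convex[OF assms(1)]]
    assms(2) has_field_derivative_at_within by blast

lemma telescope:
  fixes f :: "nat \<Rightarrow> real"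
  shows "(\<Sum>k=1..m. (-1)^(k+1) * f (k+1)) + (\<Sum>k=1..m. (-1)^(k+1) * f k) = f 1 + (-1)^(m+1) * f (m+1)"
proof (induction m)
  case 0 then show ?case by simp
next
  case (Suc m)
  then show ?case by (simp add: sum.distrib algebra_simps)
qed

theorem mainTheorem1:
  fixes n :: nat
    and I :: "real set"
    and xn v :: "real \<Rightarrow> real"
    and z p :: "nat \<Rightarrow> real \<Rightarrow> real"
  assumes n_ge: "n \<ge> 1"
    and I_open: "open I" and I_interval: "is_interval I" and I_ne: "I \<noteq> {}"
    and v_cont: "continuous_on I v"
    and dx: "\<And>t. t \<in> I \<Longrightarrow> (xn has_real_derivative (v t - xn t)) (at t)"
    and dz_top: "\<And>t. t \<in> I \<Longrightarrow> (z (n-1) has_real_derivative v t) (at t)"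
    and dz: "\<And>k t. k + 2 \<le> n \<Longrightarrow> t \<in> I \<Longrightarrow> (z k has_real_derivative z (k+1) t) (at t)"
    and dp_n: "\<And>t. t \<in> I \<Longrightarrow> (p n has_real_derivative
                 (p n t + (-1)^(n+1) * (2 * x1_of n z xn t - z 0 t))) (at t)"
    and dp_k: "\<And>k t. 1 \<le> k \<Longrightarrow> k \<le> n - 1 \<Longrightarrow> t \<in> I \<Longrightarrow> (p k has_real_derivative
                 (- p (k-1) t + (-1)^(k+1) * (2 * x1_of n z xn t - z 0 t))) (at t)"
    and dp_0: "\<And>t. t \<in> I \<Longrightarrow> (p 0 has_real_derivative (z 0 t - x1_of n z xn t)) (at t)"
    and singular: "\<And>t. t \<in> I \<Longrightarrow> p n t + p (n-1) t = 0"
  shows "\<exists>Y Z :: real. \<forall>t\<in>I.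
           (\<forall>k<n. z k t = v t) \<and> v t = Z * exp t \<and>
           xn t = Y * exp (- t) + Z * sinh t"
proof -
  obtain m where nm: "n = Suc m" using n_ge by (cases n) auto
  define x1 where "x1 = x1_of n z xn"
  define w where "w t = 2 * x1 t - z 0 t" for t
  define \<sigma> where "\<sigma> = ((-1::real)^m)"
  have sn: "(-1::real)^(n+1) = \<sigma>" by (simp add: nm \<sigma>_def)
  have dpn: "(p n has_real_derivative (p n t + \<sigma> * w t)) (at t)" if "t \<in> I" for t
    using dp_n[OF that] unfolding sn w_def x1_def .
  have D: "\<forall>t\<in>I. p n t + (-1)^j * p (m - j) t = 0" if "j \<le> m" for j
    using that
  proof (induction j)
    case 0 then show ?case using singular by (simp add: nm)
  next
    case (Suc j)
    define k where "k = m - j"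
    have k1: "1 \<le> k" "k \<le> n - 1" using Suc.prems by (auto simp: k_def nm)
    have km: "m - Suc j = k - 1" by (simp add: k_def)
    have pw: "(-1::real)^j * (-1)^(k+1) = - \<sigma>"
    proof -
      have "j + (k+1) = Suc m" using Suc.prems by (simp add: k_def)
      then have "(-1::real)^j * (-1)^(k+1) = (-1)^(Suc m)" by (metis power_add)
      then show ?thesis by (simp add: \<sigma>_def)
    qed
    show ?case
    proof
      fix t assume t: "t \<in> I"
      have d1: "((\<lambda>s. p n s + (-1)^j * p k s) has_real_derivative
          (p n t + \<sigma> * w t + (-1)^j * (- p (k-1) t + (-1)^(k+1) * w t))) (at t)"
        using dpn[OF t] dp_k[OF k1 t] by (auto intro!: derivative_eq_intros simp: w_def x1_def)
      have d2: "((\<lambda>s. 0::real) has_real_derivative 0) (at t)" by simp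
      have "p n t + \<sigma> * w t + (-1)^j * (- p (k-1) t + (-1)^(k+1) * w t) = 0"
        by (rule deriv_eq_on[OF I_open t _ d1 d2]) (use Suc.IH Suc.prems k_def in auto)
      then have "p n t + \<sigma> * w t - (-1)^j * p (k-1) t + ((-1)^j * (-1)^(k+1)) * w t = 0"
        by (simp add: algebra_simps)
      then show "p n t + (-1)^Suc j * p (m - Suc j) t = 0" using pw km by simp
    qed
  qed
  have Dm: "p n t + \<sigma> * p 0 t = 0" if "t \<in> I" for t
    using D[of m] that by (simp add: \<sigma>_def)
  have pnx: "p n t = - \<sigma> * x1 t" if t: "t \<in> I" for t
  proof -
    have d1: "((\<lambda>s. p n s + \<sigma> * p 0 s) has_real_derivative
          (p n t + \<sigma> * w t + \<sigma> * (z 0 t - x1 t))) (at t)"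
      using dpn[OF t] dp_0[OF t] by (auto intro!: derivative_eq_intros simp: x1_def)
    have d2: "((\<lambda>s. 0::real) has_real_derivative 0) (at t)" by simp
    have "p n t + \<sigma> * w t + \<sigma> * (z 0 t - x1 t) = 0"
      by (rule deriv_eq_on[OF I_open t _ d1 d2]) (use Dm in auto)
    then show ?thesis by (simp add: w_def algebra_simps)
  qed
  define G where "G k t = (if k \<le> m then z k t else v t)" for k t
  have dG: "(z k has_real_derivative G (k+1) t) (at t)" if "k \<le> m" "t \<in> I" for k t
  proof (cases "k < m")
    case True then show ?thesis using dz[of k t] that by (simp add: G_def nm)
  next
    case False then have "k = m" using that by simp
    then show ?thesis using dz_top[OF that(2)] by (simp add: G_def nm)
  qed
  have sig2: "\<sigma> * \<sigma> = 1" by (simp add: \<sigma>_def flip: power_add mult_2)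
  have dx1: "(x1 has_real_derivative (G 1 t - x1 t)) (at t)" if t: "t \<in> I" for t
  proof -
    have x1e: "x1 = (\<lambda>s. (\<Sum>k=1..m. (-1)^(k+1) * z k s) + \<sigma> * xn s)"
      by (rule ext) (simp add: x1_def x1_of_def nm \<sigma>_def)
    have "((\<lambda>s. (\<Sum>k=1..m. (-1)^(k+1) * z k s) + \<sigma> * xn s) has_real_derivative
       ((\<Sum>k=1..m. (-1)^(k+1) * G (k+1) t) + \<sigma> * (v t - xn t))) (at t)"
      using dG t dx[OF t] by (auto intro!: derivative_eq_intros sum.cong)
    moreover have "(\<Sum>k=1..m. (-1)^(k+1) * G (k+1) t) + \<sigma> * (v t - xn t) = G 1 t - x1 t"
    proof -
      have tel: "(\<Sum>k=1..m. (-1)^(k+1) * G (k+1) t) + (\<Sum>k=1..m. (-1)^(k+1) * G k t)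
            = G 1 t + (-1)^(m+1) * G (m+1) t"
        using telescope[where m=m and f="\<lambda>k. G k t"] by simp
      have s: "(\<Sum>k=1..m. (-1)^(k+1) * G k t) = (\<Sum>k=1..m. (-1)^(k+1) * z k t)"
        by (rule sum.cong) (auto simp: G_def)
      have "G (m+1) t = v t" by (simp add: G_def)
      then show ?thesis using tel s by (simp add: x1e \<sigma>_def algebra_simps)
    qed
    ultimately show ?thesis by (simp add: x1e)
  qed
  have G1: "G 1 t = z 0 t" if t: "t \<in> I" for t
  proof -
    have d1: "(p n has_real_derivative (p n t + \<sigma> * w t)) (at t)" using dpn[OF t] .
    have d2: "((\<lambda>s. - \<sigma> * x1 s) has_real_derivative (- \<sigma> * (G 1 t - x1 t))) (at t)"
      using dx1[OF t] by (auto intro!: derivative_eq_intros)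
    have "p n t + \<sigma> * w t = - \<sigma> * (G 1 t - x1 t)"
      by (rule deriv_eq_on[OF I_open t _ d1 d2]) (use pnx in auto)
    then have "- \<sigma> * x1 t + \<sigma> * (2 * x1 t - z 0 t) = - \<sigma> * (G 1 t - x1 t)"
      using pnx[OF t] by (simp add: w_def)
    then have "\<sigma> * (G 1 t - z 0 t) = 0" by (simp add: algebra_simps)
    moreover have "\<sigma> \<noteq> 0" by (simp add: \<sigma>_def)
    ultimately show ?thesis by simp
  qed
  have Gadj: "\<forall>t\<in>I. G k t = G (Suc k) t" if "k \<le> m" for k
    using that
  proof (induction k)
    case 0 then show ?case using G1 by (simp add: G_def)
  next
    case (Suc k)
    show ?case
    proof
      fix t assume t: "t \<in> I"
      have km: "k \<le> m" "Suc k \<le> m" using Suc.prems by auto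
      have eq: "\<And>s. s \<in> I \<Longrightarrow> z k s = z (Suc k) s"
        using Suc.IH km by (auto simp: G_def)
      have "G (k+1) t = G (Suc k + 1) t"
        by (rule deriv_eq_on[OF I_open t eq dG[OF km(1) t] dG[OF km(2) t]])
      then show "G (Suc k) t = G (Suc (Suc k)) t" by simp
    qed
  qed
  have Gall: "\<forall>t\<in>I. G k t = z 0 t" if "k \<le> m + 1" for k
    using that
  proof (induction k)
    case 0 then show ?case by (simp add: G_def)
  next
    case (Suc k) then show ?case using Gadj[of k] by auto
  qed
  have zk: "z k t = z 0 t" if "k < n" "t \<in> I" for k t
    using Gall[of k] that by (auto simp: G_def nm)
  have vz: "v t = z 0 t" if "t \<in> I" for t
    using Gall[of "m+1"] that by (auto simp: G_def)
  have dz0: "(z 0 has_real_derivative z 0 t) (at t)" if t: "t \<in> I" for t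
    using dG[of 0 t] G1[OF t] t by simp
  obtain Z where Z: "\<forall>t\<in>I. z 0 t * exp (- t) = Z"
  proof -
    have "\<exists>c. \<forall>t\<in>I. z 0 t * exp (- t) = c"
    proof (rule const_on[OF I_interval])
      fix t assume t: "t \<in> I"
      have "((\<lambda>t. z 0 t * exp (- t)) has_real_derivative
              (z 0 t * exp (- t) + z 0 t * (exp (- t) * (- 1)))) (at t)"
        using dz0[OF t] by (auto intro!: derivative_eq_intros)
      then show "((\<lambda>t. z 0 t * exp (- t)) has_real_derivative 0) (at t)"
        by simp
    qed
    then show ?thesis using that by blast
  qed
  have z0e: "z 0 t = Z * exp t" if t: "t \<in> I" for t
  proof -
    have "z 0 t * exp (- t) * exp t = Z * exp t" using Z t by simp
    then show ?thesis by (simp add: exp_minus field_simps)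
  qed
  obtain Y where Y: "\<forall>t\<in>I. (xn t - Z * sinh t) * exp t = Y"
  proof -
    have "\<exists>c. \<forall>t\<in>I. (xn t - Z * sinh t) * exp t = c"
    proof (rule const_on[OF I_interval])
      fix t assume t: "t \<in> I"
      have "((\<lambda>t. (xn t - Z * sinh t) * exp t) has_real_derivative
              ((v t - xn t - Z * cosh t) * exp t + (xn t - Z * sinh t) * exp t)) (at t)"
        using dx[OF t] by (auto intro!: derivative_eq_intros)
      moreover have "(v t - xn t - Z * cosh t) * exp t + (xn t - Z * sinh t) * exp t = 0"
      proof -
        have "v t = Z * (cosh t + sinh t)" using vz[OF t] z0e[OF t] by (simp add: cosh_plus_sinh)
        then show ?thesis by (simp add: algebra_simps)
      qed
      ultimately show "((\<lambda>t. (xn t - Z * sinh t) * exp t) has_real_derivative 0) (at t)"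
        by simp
    qed
    then show ?thesis using that by blast
  qed
  show ?thesis
  proof (intro exI ballI conjI allI impI)
    fix t assume t: "t \<in> I"
    show "v t = Z * exp t" using vz[OF t] z0e[OF t] by simp
    fix k assume "k < n"
    then show "z k t = v t" using zk[of k t] vz[OF t] t by simp
  next
    fix t assume t: "t \<in> I"
    have "(xn t - Z * sinh t) * exp t * exp (- t) = Y * exp (- t)" using Y t by simp
    then show "xn t = Y * exp (- t) + Z * sinh t" by (simp add: exp_minus field_simps)
  qed
qed

end
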